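(* Let $(A,B,C,D)$ be reduced words in $a^{\pm1},b^{\pm1}$ defining a local $\mathrm{Aut}(F_3)$ braid representation $\Theta$. If $B$ contains no letter $a^{\pm1}$, then $\Theta$ is of type $(T)$ or $(T')$, i.e. $(A,B,C,D)$ is equivalent up to natural symmetries to $(a,b,a,b)$ or to $(a,b^{-1},a^{-1},b)$.
   Context: $F_2$ is free on $a,b$; $F_3$ is free on $x_1,x_2,x_3$; $B_3$ has standard generators $\sigma_1,\sigma_2$. For a word $W$ in $a^{\pm1},b^{\pm1}$, $W(U,V)$ denotes substitution of $U$ for $a$ and $V$ for $b$. A quadruple $(A,B,C,D)$ of reduced words defines a local $\mathrm{Aut}(F_3)$ braid representation if $\tau:a\mapsto A,b\mapsto B$ and $\kappa:a\mapsto C,b\mapsto D$ are automorphisms of $F_2$ and the automorphisms $s_1: x_1\mapsto A(x_1,x_2),\ x_2\mapsto B(x_1,x_2),\ x_3\mapsto x_3$ and $s_2: x_1\mapsto x_1,\ x_2\mapsto C(x_2,x_3),\ x_3\mapsto D(x_2,x_3)$ of $F_3$ satisfy $s_1s_2s_1=s_2s_1s_2$; $\Theta$ is the resulting representation $\sigma_i\mapsto s_i$. Natural symmetries: Inverse replaces $(A,B,C,D)$ by the reduced words of $\tau^{-1}(a),\tau^{-1}(b),\kappa^{-1}(a),\kappa^{-1}(b)$; Swap replaces it by $(D^{\sigma},C^{\sigma},B^{\sigma},A^{\sigma})$ with $W^{\sigma}$ obtained by interchanging letters $a$ and $b$; Backward replaces it by the words read backwards. Equivalence up to natural symmetries means related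 by a composition of these. *)

theory Defs
  imports Main
begin

text \<open>A letter is a pair
  (g, e) with e = False meaning the generator g and e = True meaning its inverse.
  For F_2: a = 0, b = 1.  For F_3: x1 = 0, x2 = 1, x3 = 2.\<close>

type_synonym word = "(nat \<times> bool) list"

fun red :: "word \<Rightarrow> word" where
  "red [] = []"
| "red (x # xs) = (case red xs of
      [] \<Rightarrow> [x]
    | y # ys \<Rightarrow> (if fst y = fst x \<and> snd y \<noteq> snd x then ys else x # y # ys))"

fun reduced :: "word \<Rightarrow> bool" where
  "reduced [] = True"
| "reduced [x] = True"
| "reduced (x # y # ys) = (\<not> (fst x = fst y \<and> snd x \<noteq> snd y) \<and> reduced (y # ys))"

definition words :: "nat \<Rightarrow> word set" where
  "words n = {w. reduced w \<and> (\<forall>l\<in>set w. fst l < n)}"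

definition winv :: "word \<Rightarrow> word" where
  "winv w = rev (map (\<lambda>(g, e). (g, \<not> e)) w)"

text \<open>Substitution W(f 0, f 1, ...), freely reduced: the endomorphism sending
  generator g to f g.\<close>
definition subst :: "(nat \<Rightarrow> word) \<Rightarrow> word \<Rightarrow> word" where
  "subst f w = red (concat (map (\<lambda>(g, e). if e then winv (f g) else f g) w))"

definition sub2 :: "word \<Rightarrow> word \<Rightarrow> nat \<Rightarrow> word" where
  "sub2 U V = (\<lambda>g. if g = 0 then U else V)"

definition is_aut2 :: "word \<Rightarrow> word \<Rightarrow> bool" where
  "is_aut2 U V \<longleftrightarrow> bij_betw (subst (sub2 U V)) (words 2) (words 2)"

definition aut2_inv :: "word \<Rightarrow> word \<Rightarrow> nat \<Rightarrow> word" where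
  "aut2_inv U V g = the_inv_into (words 2) (subst (sub2 U V)) [(g, False)]"

definition shift :: "word \<Rightarrow> word" where
  "shift w = map (\<lambda>(g, e). (g + 1, e)) w"

definition s1 :: "word \<Rightarrow> word \<Rightarrow> nat \<Rightarrow> word" where
  "s1 A B = (\<lambda>g. if g = 0 then A else if g = 1 then B else [(2, False)])"

text \<open>s_2: x1 \<mapsto> x1, x2 \<mapsto> C(x2,x3), x3 \<mapsto> D(x2,x3).\<close>
definition s2 :: "word \<Rightarrow> word \<Rightarrow> nat \<Rightarrow> word" where
  "s2 C D = (\<lambda>g. if g = 0 then [(0, False)] else if g = 1 then shift C else shift D)"

definition local_braid_rep :: "word \<Rightarrow> word \<Rightarrow> word \<Rightarrow> word \<Rightarrow> bool" where
  "local_braid_rep A B C D \<longleftrightarrow>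
     A \<in> words 2 \<and> B \<in> words 2 \<and> C \<in> words 2 \<and> D \<in> words 2 \<and>
     is_aut2 A B \<and> is_aut2 C D \<and>
     (\<forall>w \<in> words 3.
        subst (s1 A B) (subst (s2 C D) (subst (s1 A B) w)) =
        subst (s2 C D) (subst (s1 A B) (subst (s2 C D) w)))"

definition swapab :: "word \<Rightarrow> word" where
  "swapab w = map (\<lambda>(g, e). (if g = 0 then 1 else 0, e)) w"

type_synonym quad = "word \<times> word \<times> word \<times> word"

inductive sym_step :: "quad \<Rightarrow> quad \<Rightarrow> bool" where
  inverse: "is_aut2 A B \<Longrightarrow> is_aut2 C D \<Longrightarrow>
     sym_step (A, B, C, D) (aut2_inv A B 0, aut2_inv A B 1, aut2_inv C D 0, aut2_inv C D 1)"
| swap: "sym_step (A, B, C, D) (swapab D, swapab C, swapab B, swapab A)"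
| backward: "sym_step (A, B, C, D) (rev A, rev B, rev C, rev D)"

definition equiv_nat_sym :: "quad \<Rightarrow> quad \<Rightarrow> bool" where
  "equiv_nat_sym = sym_step\<^sup>*\<^sup>*"

end

theory Submission
  imports Defs
begin


definition cnc :: "nat \<times> bool \<Rightarrow> nat \<times> bool \<Rightarrow> bool" where
  "cnc x y \<longleftrightarrow> fst x = fst y \<and> snd x \<noteq> snd y"

definition Fr :: "nat \<times> bool \<Rightarrow> word \<Rightarrow> word" where
  "Fr x r = (case r of [] \<Rightarrow> [x] | y # ys \<Rightarrow> (if cnc x y then ys else x # y # ys))"

lemma red_Cons: "red (x # xs) = Fr x (red xs)"
proof (cases "red xs")
  case Nil then show ?thesis by (simp add: Fr_def)
next
  case (Cons y ys)
  have "(fst y = fst x \<and> snd y \<noteq> snd x) = cnc x y" by (auto simp: cnc_def)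
  then show ?thesis using Cons by (simp add: Fr_def)
qed

declare red.simps(2)[simp del]

lemma reduced_Cons_Cons[simp]: "reduced (x # y # ys) \<longleftrightarrow> \<not> cnc x y \<and> reduced (y # ys)"
  by (simp add: cnc_def)
declare reduced.simps(3)[simp del]

lemma reduced_tl: "reduced (x # xs) \<Longrightarrow> reduced xs"
  by (cases xs) auto

lemma reduced_red: "reduced (red w)"
proof (induction w)
  case Nil then show ?case by simp
next
  case (Cons x w)
  then show ?case
    by (auto simp: red_Cons Fr_def reduced_Cons_Cons dest: reduced_tl split: list.splits)
qed

lemma red_reduced: "reduced w \<Longrightarrow> red w = w"
proof (induction w)
  case Nil then show ?case by simp
next
  case (Cons x w)
  then show ?case
    by (cases w) (auto simp: red_Cons Fr_def reduced_Cons_Cons)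
qed

lemma red_red[simp]: "red (red w) = red w"
  using red_reduced reduced_red by blast

lemma cnc_sym: "cnc x y \<Longrightarrow> cnc y x" by (auto simp: cnc_def)

lemma Fr_reduced: "reduced (x # r) \<Longrightarrow> Fr x r = x # r"
  by (cases r) (auto simp: Fr_def reduced_Cons_Cons)

lemma cnc_eq: "cnc x y \<Longrightarrow> cnc x z \<Longrightarrow> y = z"
  by (cases x; cases y; cases z) (auto simp: cnc_def)

lemma red_cancel: "cnc x y \<Longrightarrow> red (x # y # l) = red l"
proof -
  assume c: "cnc x y"
  have r: "reduced (red l)" by (rule reduced_red)
  show ?thesis
  proof (cases "red l")
    case Nil then show ?thesis using c by (simp add: red_Cons Fr_def)
  next
    case (Cons z zs)
    show ?thesis
    proof (cases "cnc y z")
      case True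
      then have "z = x" using c cnc_eq cnc_sym by metis
      then have "reduced (x # zs)" using r Cons by simp
      then have "Fr x zs = z # zs" using Fr_reduced \<open>z = x\<close> by simp
      then show ?thesis using Cons True by (simp add: red_Cons Fr_def)
    next
      case False
      then show ?thesis using Cons c by (simp add: red_Cons Fr_def)
    qed
  qed
qed

lemma red_append_right: "red (u @ v) = red (u @ red v)"
  by (induction u) (simp_all add: red_Cons)

lemma red_append_left: "red (u @ v) = red (red u @ v)"
proof (induction u)
  case Nil then show ?case using red_append_right[of "[]"] by simp
next
  case (Cons x u)
  have "red ((x # u) @ v) = Fr x (red (red u @ v))" using Cons by (simp add: red_Cons)
  also have "\<dots> = red (x # red u @ v)" by (simp add: red_Cons)
  also have "\<dots> = red (Fr x (red u) @ v)"
  proof (cases "red u")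
    case Nil then show ?thesis by (simp add: Fr_def)
  next
    case (Cons y ys)
    show ?thesis
    proof (cases "cnc x y")
      case True
      then have "red (x # y # ys @ v) = red (ys @ v)" by (rule red_cancel)
      then show ?thesis using Cons True by (simp add: Fr_def)
    next
      case False
      then show ?thesis using Cons by (simp add: Fr_def)
    qed
  qed
  finally show ?case by (simp only: red_Cons append_Cons)
qed

lemma red_mid_cancel: "cnc x y \<Longrightarrow> red (l @ x # y # r) = red (l @ r)"
  by (metis red_append_right red_cancel)

lemma red_both: "red (u @ v) = red (red u @ red v)"
  by (metis red_append_left red_append_right)

lemma red_Nil_append: "red v = [] \<Longrightarrow> red (u @ v) = red u"
  by (metis append_Nil2 red_append_right)

lemma red_Nil_append2: "red u = [] \<Longrightarrow> red (u @ v) = red v"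
  by (metis append_Nil red_append_left)

lemma set_red: "set (red w) \<subseteq> set w"
  by (induction w) (auto simp: red_Cons Fr_def split: list.splits)

definition flp :: "nat \<times> bool \<Rightarrow> nat \<times> bool" where "flp x = (fst x, \<not> snd x)"

lemma winv_alt: "winv w = rev (map flp w)"
  by (simp add: winv_def flp_def case_prod_beta')

lemma winv_append[simp]: "winv (u @ v) = winv v @ winv u"
  by (simp add: winv_alt)
lemma winv_Nil[simp]: "winv [] = []" by (simp add: winv_alt)
lemma winv_Cons: "winv (x # w) = winv w @ [flp x]" by (simp add: winv_alt)
lemma winv_winv[simp]: "winv (winv w) = w"
  by (simp add: winv_alt rev_map flp_def comp_def)
lemma cnc_flp: "cnc x (flp x)" by (simp add: cnc_def flp_def)
lemma cnc_flp2: "cnc (flp x) x" by (simp add: cnc_def flp_def)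
lemma fst_winv: "fst ` set (winv w) = fst ` set w"
  by (force simp: winv_alt flp_def image_iff)
lemma winv_Nil_iff[simp]: "winv w = [] \<longleftrightarrow> w = []" by (simp add: winv_alt)
lemma length_winv[simp]: "length (winv w) = length w" by (simp add: winv_alt)

lemma red_w_winv: "red (w @ winv w) = []"
proof (induction w)
  case Nil then show ?case by simp
next
  case (Cons x w)
  have "red ((x # w) @ winv (x # w)) = red (x # (w @ winv w) @ [flp x])"
    by (simp add: winv_Cons)
  also have "\<dots> = red (x # red ((w @ winv w) @ [flp x]))" by (simp add: red_Cons)
  also have "red ((w @ winv w) @ [flp x]) = red [flp x]"
    by (metis Cons.IH append_Nil red_append_left)
  also have "red (x # red [flp x]) = []" by (simp add: red_Cons Fr_def cnc_flp)
  finally show ?case .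
qed

lemma red_winv_w: "red (winv w @ w) = []"
  using red_w_winv[of "winv w"] by simp

lemma reduced_append: "reduced (u @ v) \<longleftrightarrow> reduced u \<and> reduced v \<and> (u = [] \<or> v = [] \<or> \<not> cnc (last u) (hd v))"
proof (induction u)
  case Nil then show ?case by simp
next
  case (Cons x u)
  then show ?case
    by (cases u; cases v) (auto simp: reduced_Cons_Cons)
qed

lemma cnc_flp_iff: "cnc (flp x) (flp y) \<longleftrightarrow> cnc x y" by (auto simp: cnc_def flp_def)

lemma reduced_winv: "reduced w \<Longrightarrow> reduced (winv w)"
proof (induction w)
  case Nil then show ?case by simp
next
  case (Cons x w)
  then have "reduced (winv w)" using reduced_tl by blast
  moreover have "w \<noteq> [] \<Longrightarrow> \<not> cnc (last (winv w)) (flp x)"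
    using Cons.prems by (cases w) (auto simp: winv_Cons cnc_def flp_def)
  ultimately show ?case by (auto simp: winv_Cons reduced_append)
qed

lemma red_winv: "red (winv w) = winv (red w)"
proof -
  have "red (winv w) = red (winv w @ (w @ winv (red w)))"
  proof -
    have "red (w @ winv (red w)) = []"
      by (metis red_append_left red_w_winv)
    then show ?thesis by (simp add: red_Nil_append)
  qed
  also have "\<dots> = red ((winv w @ w) @ winv (red w))" by simp
  also have "\<dots> = red (winv (red w))" using red_Nil_append2[OF red_winv_w] by simp
  also have "\<dots> = winv (red w)" by (simp add: red_reduced reduced_winv reduced_red)
  finally show ?thesis .
qed



definition img :: "(nat \<Rightarrow> word) \<Rightarrow> nat \<times> bool \<Rightarrow> word" where
  "img f x = (if snd x then winv (f (fst x)) else f (fst x))"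

lemma subst_alt: "subst f w = red (concat (map (img f) w))"
proof -
  have "(\<lambda>(g, e). if e then winv (f g) else f g) = img f"
    by (auto simp: img_def fun_eq_iff)
  then show ?thesis by (simp add: subst_def)
qed

lemma subst_Nil[simp]: "subst f [] = []" by (simp add: subst_alt)

lemma subst_Cons: "subst f (x # w) = red (img f x @ subst f w)"
  unfolding subst_alt list.map concat.simps by (rule red_append_right)

lemma subst_append: "subst f (u @ v) = red (subst f u @ subst f v)"
  unfolding subst_alt map_append concat_append by (rule red_both)

lemma img_flp: "img f (flp x) = winv (img f x)"
  by (simp add: img_def flp_def)

lemma img_cancel: "cnc x y \<Longrightarrow> red (img f x @ img f y @ r) = red r"
proof -
  assume c: "cnc x y"
  then have "y = flp x" using cnc_eq cnc_flp by blast
  then have "img f y = winv (img f x)" by (simp add: img_flp)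
  then show ?thesis
    by (metis append.assoc red_Nil_append2 red_w_winv)
qed

lemma subst_red: "subst f (red w) = subst f w"
proof (induction w)
  case Nil then show ?case by simp
next
  case (Cons x w)
  have "subst f (red (x # w)) = subst f (x # red w)"
  proof (cases "red w")
    case Nil then show ?thesis by (simp add: red_Cons Fr_def)
  next
    case (Cons y ys)
    show ?thesis
    proof (cases "cnc x y")
      case True
      have "subst f (x # y # ys) = red (img f x @ img f y @ subst f ys)"
        by (simp only: subst_Cons) (rule red_append_right[symmetric])
      also have "\<dots> = subst f ys" using img_cancel[OF True] by (simp add: subst_alt)
      finally show ?thesis using Cons True by (simp add: red_Cons Fr_def)
    next
      case False then show ?thesis using Cons by (simp add: red_Cons Fr_def)
    qed
  qed
  also have "\<dots> = subst f (x # w)" using Cons.IH by (simp add: subst_Cons)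
  finally show ?case .
qed

lemma subst_winv: "subst f (winv w) = winv (subst f w)"
proof -
  have "concat (map (img f) (winv w)) = winv (concat (map (img f) w))"
    by (induction w) (simp_all add: winv_Cons img_flp)
  then show ?thesis by (simp add: subst_alt red_winv)
qed

lemma subst_subst: "subst f (subst g w) = subst (\<lambda>i. subst f (g i)) w"
proof (induction w)
  case Nil then show ?case by simp
next
  case (Cons x w)
  have "subst f (subst g (x # w)) = subst f (img g x @ subst g w)"
    by (simp add: subst_Cons subst_red)
  also have "\<dots> = red (subst f (img g x) @ subst f (subst g w))" by (rule subst_append)
  also have "subst f (img g x) = img (\<lambda>i. subst f (g i)) x"
    by (simp add: img_def subst_winv)
  finally have "subst f (subst g (x # w)) = red (img (\<lambda>i. subst f (g i)) x @ subst f (subst g w))" .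
  then show ?case using Cons.IH by (simp add: subst_Cons)
qed

lemma subst_single[simp]: "subst f [(g, False)] = red (f g)"
  by (simp add: subst_alt img_def)

lemma subst_single_inv[simp]: "subst f [(g, True)] = winv (red (f g))"
  by (simp add: subst_alt img_def red_winv)

lemma subst_cong: "(\<And>x. x \<in> set w \<Longrightarrow> f (fst x) = f' (fst x)) \<Longrightarrow> subst f w = subst f' w"
proof -
  assume "\<And>x. x \<in> set w \<Longrightarrow> f (fst x) = f' (fst x)"
  then have "map (img f) w = map (img f') w" by (intro map_cong) (auto simp: img_def)
  then show ?thesis unfolding subst_alt by (rule arg_cong[where f="\<lambda>l. red (concat l)"])
qed

lemma subst_id: "(\<And>x. x \<in> set w \<Longrightarrow> f (fst x) = [(fst x, False)]) \<Longrightarrow> subst f w = red w"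
proof -
  assume a: "\<And>x. x \<in> set w \<Longrightarrow> f (fst x) = [(fst x, False)]"
  have "concat (map (img f) w) = w"
    using a by (induction w) (auto simp: img_def winv_alt flp_def)
  then show ?thesis by (simp add: subst_alt)
qed

lemma words_red: "w \<in> words n \<Longrightarrow> red w = w"
  by (simp add: words_def red_reduced)

lemma gens_img:
  assumes "\<And>x y. x \<in> set w \<Longrightarrow> y \<in> set (f (fst x)) \<Longrightarrow> fst y < n"
  shows "\<forall>y \<in> set (concat (map (img f) w)). fst y < n"
proof -
  have h: "fst y < n" if x: "x \<in> set w" and y: "y \<in> set (img f x)" for x y
  proof (cases "snd x")
    case True
    then have "fst y \<in> fst ` set (winv (f (fst x)))" using y by (simp add: img_def)
    then have "fst y \<in> fst ` set (f (fst x))" by (simp add: fst_winv)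
    then obtain z where "z \<in> set (f (fst x))" "fst y = fst z" by auto
    then show ?thesis using assms x by metis
  next
    case False then show ?thesis using y assms x by (simp add: img_def)
  qed
  then show ?thesis by auto
qed

lemma subst_words:
  assumes "\<And>x y. x \<in> set w \<Longrightarrow> y \<in> set (f (fst x)) \<Longrightarrow> fst y < n"
  shows "subst f w \<in> words n"
proof -
  have "\<forall>y \<in> set (concat (map (img f) w)). fst y < n"
    using gens_img[of w f n] assms by blast
  then show ?thesis
    using set_red by (force simp: words_def subst_alt reduced_red)
qed

lemma subst_words2:
  assumes "U \<in> words n" "V \<in> words n"
  shows "subst (sub2 U V) w \<in> words n"
  using assms by (intro subst_words) (auto simp: words_def sub2_def split: if_splits)

lemma words_mono: "w \<in> words m \<Longrightarrow> m \<le> n \<Longrightarrow> w \<in> words n"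
  by (auto simp: words_def)

lemma words_single[simp]: "[(g, e)] \<in> words n \<longleftrightarrow> g < n"
  by (simp add: words_def)

lemma shift_Nil[simp]: "shift [] = []" by (simp add: shift_def)
lemma shift_Cons: "shift (x # w) = (fst x + 1, snd x) # shift w" by (simp add: shift_def case_prod_beta)
lemma shift_append[simp]: "shift (u @ v) = shift u @ shift v" by (simp add: shift_def)
lemma shift_Fr: "shift (Fr x r) = Fr (Suc (fst x), snd x) (shift r)"
  by (cases r) (auto simp: Fr_def shift_Cons cnc_def)
lemma shift_red: "shift (red w) = red (shift w)"
  by (induction w) (simp_all add: red_Cons shift_Cons shift_Fr)
lemma shift_winv: "shift (winv w) = winv (shift w)"
  by (simp add: shift_def winv_def rev_map case_prod_beta comp_def)
lemma shift_inj: "shift u = shift v \<Longrightarrow> u = v"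
proof -
  assume "shift u = shift v"
  moreover have "inj (\<lambda>(g::nat, e::bool). (g + 1, e))" by (auto simp: inj_def)
  ultimately show ?thesis by (simp add: shift_def inj_map_eq_map)
qed
lemma subst_shift: "subst f (shift w) = subst (\<lambda>g. f (Suc g)) w"
proof -
  have "concat (map (img f) (shift w)) = concat (map (img (\<lambda>g. f (Suc g))) w)"
    by (induction w) (simp_all add: shift_Cons img_def)
  then show ?thesis by (simp add: subst_alt)
qed
lemma shift_subst: "shift (subst f w) = subst (\<lambda>g. shift (f g)) w"
proof -
  have "shift (concat (map (img f) w)) = concat (map (img (\<lambda>g. shift (f g))) w)"
    by (induction w) (simp_all add: img_def shift_winv)
  then show ?thesis by (simp add: subst_alt shift_red)
qed
lemma shift_words: "w \<in> words n \<Longrightarrow> shift w \<in> words (Suc n)"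
proof -
  assume "w \<in> words n"
  then have "reduced w" "\<forall>l\<in>set w. fst l < n" by (auto simp: words_def)
  moreover have "red (shift w) = shift w" using \<open>reduced w\<close>
    by (metis red_reduced shift_red)
  then have "reduced (shift w)" by (metis reduced_red)
  moreover have "\<forall>l\<in>set (shift w). fst l < Suc n" using \<open>\<forall>l\<in>set w. fst l < n\<close>
    by (auto simp: shift_def)
  ultimately show ?thesis by (simp add: words_def)
qed

definition sw :: "nat \<Rightarrow> nat" where "sw g = (if g = 0 then 1 else 0)"
lemma swapab_alt: "swapab w = map (\<lambda>x. (sw (fst x), snd x)) w"
  by (simp add: swapab_def sw_def case_prod_beta)
lemma sw_eq: "a < 2 \<Longrightarrow> b < 2 \<Longrightarrow> sw a = sw b \<longleftrightarrow> a = b"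
  by (auto simp: sw_def)
lemma swapab_Fr: "fst x < 2 \<Longrightarrow> (\<forall>y \<in> set r. fst y < 2) \<Longrightarrow>
    swapab (Fr x r) = Fr (sw (fst x), snd x) (swapab r)"
  by (cases r) (auto simp: Fr_def swapab_alt cnc_def sw_eq)
lemma swapab_red: "(\<forall>x \<in> set w. fst x < 2) \<Longrightarrow> swapab (red w) = red (swapab w)"
proof (induction w)
  case Nil then show ?case by (simp add: swapab_alt)
next
  case (Cons x w)
  have s: "\<forall>y \<in> set (red w). fst y < 2" using Cons.prems set_red by fastforce
  then show ?case using Cons by (simp add: red_Cons swapab_Fr) (simp add: swapab_alt red_Cons)
qed
lemma swapab_winv: "swapab (winv w) = winv (swapab w)"
  by (simp add: swapab_alt winv_alt rev_map flp_def comp_def)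
lemma swapab_swapab: "(\<forall>x \<in> set w. fst x < 2) \<Longrightarrow> swapab (swapab w) = w"
  by (induction w) (auto simp: swapab_alt sw_def)
lemma swapab_words: "w \<in> words 2 \<Longrightarrow> swapab w \<in> words 2"
proof -
  assume w: "w \<in> words 2"
  then have s: "\<forall>x \<in> set w. fst x < 2" by (simp add: words_def)
  have "red (swapab w) = swapab w" using swapab_red[OF s] words_red[OF w] by simp
  then have "reduced (swapab w)" by (metis reduced_red)
  moreover have "\<forall>l\<in>set (swapab w). fst l < 2" by (auto simp: swapab_alt sw_def)
  ultimately show ?thesis by (simp add: words_def)
qed
lemma subst_swapab: "subst f (swapab w) = subst (\<lambda>g. f (sw g)) w"
proof -
  have "concat (map (img f) (swapab w)) = concat (map (img (\<lambda>g. f (sw g))) w)"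
    by (induction w) (simp_all add: swapab_alt img_def)
  then show ?thesis by (simp add: subst_alt)
qed
lemma swapab_subst:
  assumes "\<And>g. g < 2 \<Longrightarrow> \<forall>x \<in> set (f g). fst x < 2" "\<forall>x\<in>set w. fst x < 2"
  shows "swapab (subst f w) = subst (\<lambda>g. swapab (f g)) w"
proof -
  have s: "\<forall>x \<in> set (concat (map (img f) w)). fst x < 2"
    using assms by (intro gens_img) blast
  have "swapab (concat (map (img f) w)) = concat (map (img (\<lambda>g. swapab (f g))) w)"
    by (induction w) (simp_all add: img_def swapab_alt winv_alt rev_map flp_def comp_def)
  then show ?thesis using swapab_red[OF s] by (simp add: subst_alt)
qed



fun eps :: "nat list \<Rightarrow> word \<Rightarrow> int" where
  "eps [] w = 1"
| "eps (h # m) [] = 0"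
| "eps (h # m) ((g, False) # w) = eps (h # m) w + (if h = g then eps m w else 0)"
| "eps (h # m) ((g, True) # w) = eps (h # m) w - (if h = g then eps m ((g, True) # w) else 0)"

fun conv :: "(nat list \<Rightarrow> int) \<Rightarrow> (nat list \<Rightarrow> int) \<Rightarrow> nat list \<Rightarrow> int" where
  "conv F G [] = F [] * G []"
| "conv F G (h # m) = F [] * G (h # m) + conv (\<lambda>n. F (h # n)) G m"

lemma conv_add: "conv (\<lambda>n. F n + F' n) G m = conv F G m + conv F' G m"
  by (induction m arbitrary: F F') (simp_all add: algebra_simps)

lemma conv_diff: "conv (\<lambda>n. F n - F' n) G m = conv F G m - conv F' G m"
  by (induction m arbitrary: F F') (simp_all add: algebra_simps)

lemma conv_zero: "conv (\<lambda>n. 0) G m = 0"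
  by (induction m) simp_all

lemma conv_cong: "(\<And>n. F n = F' n) \<Longrightarrow> conv F G m = conv F' G m"
  by (metis ext)

lemma conv_delta: "conv (\<lambda>n. if n = [] then 1 else 0) G m = G m"
  by (cases m) (simp_all add: conv_zero)

lemma eps_Nil_word: "eps m [] = (if m = [] then 1 else 0)"
  by (cases m) simp_all

lemma eps_product: "eps m (u @ v) = conv (\<lambda>n. eps n u) (\<lambda>n. eps n v) m"
proof (induction u arbitrary: m)
  case Nil
  then show ?case by (simp add: eps_Nil_word conv_delta)
next
  case (Cons x u)
  obtain g e where x: "x = (g, e)" by force
  show ?case
  proof (cases e)
    case False
    show ?thesis
    proof (cases m)
      case Nil then show ?thesis by simp
    next
      case (Cons h m')
      have "conv (\<lambda>n. eps n ((g, False) # u)) (\<lambda>n. eps n v) (h # m')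
          = conv (\<lambda>n. eps n u) (\<lambda>n. eps n v) (h # m')
            + (if h = g then conv (\<lambda>n. eps n u) (\<lambda>n. eps n v) m' else 0)"
        by (simp add: conv_add conv_zero)
      then show ?thesis using Cons.IH x False Cons by simp
    qed
  next
    case True
    note IHu = Cons.IH
    show ?thesis
    proof (induction m)
      case Nil then show ?case by simp
    next
      case (Cons h m')
      have "conv (\<lambda>n. eps n ((g, True) # u)) (\<lambda>n. eps n v) (h # m')
          = eps [] ((g, True) # u) * eps (h # m') v + conv (\<lambda>n. eps (h # n) ((g, True) # u)) (\<lambda>n. eps n v) m'"
        by (simp only: conv.simps)
      also have "conv (\<lambda>n. eps (h # n) ((g, True) # u)) (\<lambda>n. eps n v) m'
          = conv (\<lambda>n. eps (h # n) u - (if h = g then eps n ((g, True) # u) else 0)) (\<lambda>n. eps n v) m'"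
        by (simp only: eps.simps)
      also have "\<dots> = conv (\<lambda>n. eps (h # n) u) (\<lambda>n. eps n v) m'
          - conv (\<lambda>n. (if h = g then eps n ((g, True) # u) else 0)) (\<lambda>n. eps n v) m'"
        by (rule conv_diff)
      finally have A: "conv (\<lambda>n. eps n ((g, True) # u)) (\<lambda>n. eps n v) (h # m')
          = conv (\<lambda>n. eps n u) (\<lambda>n. eps n v) (h # m')
           - conv (\<lambda>n. (if h = g then eps n ((g, True) # u) else 0)) (\<lambda>n. eps n v) m'"
        by simp
      have B: "conv (\<lambda>n. (if h = g then eps n ((g, True) # u) else 0)) (\<lambda>n. eps n v) m'
          = (if h = g then eps m' ((g, True) # u @ v) else 0)"
        using Cons.IH x True by (cases "h = g") (simp_all add: conv_zero)
      have C: "eps (h # m') ((g, True) # u @ v) = eps (h # m') (u @ v) - (if h = g then eps m' ((g, True) # u @ v) else 0)"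
        by (simp only: eps.simps)
      show ?case using A B C IHu[of "h # m'"] x True by simp
    qed
  qed
qed

lemma eps_Cons_product: "eps m (x # w) = conv (\<lambda>n. eps n [x]) (\<lambda>n. eps n w) m"
  using eps_product[of m "[x]" w] by simp

lemma eps_Cons_cong: "(\<And>n. eps n w = eps n w') \<Longrightarrow> eps m (x # w) = eps m (x # w')"
proof -
  assume h: "\<And>n. eps n w = eps n w'"
  have e: "(\<lambda>n. eps n w) = (\<lambda>n. eps n w')" using h by auto
  show ?thesis unfolding eps_Cons_product[of m x w] eps_Cons_product[of m x w'] e ..
qed

lemma eps_pair_cancel: "cnc x y \<Longrightarrow> eps n [x, y] = eps n []"
proof -
  assume c: "cnc x y"
  obtain g e where x: "x = (g, e)" by force
  then have y: "y = (g, \<not> e)" using c by (cases y) (auto simp: cnc_def)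
  show ?thesis
  proof (cases e)
    case False
    then show ?thesis using x y by (cases n) (auto simp: eps_Nil_word)
  next
    case True
    show ?thesis using x y True
    proof (induction n)
      case Nil then show ?case by simp
    next
      case (Cons h n)
      then show ?case by (cases n) (auto simp: eps_Nil_word)
    qed
  qed
qed

lemma eps_cancel: "cnc x y \<Longrightarrow> eps m (x # y # w) = eps m w"
proof -
  assume c: "cnc x y"
  have "eps m (x # y # w) = eps m ([x, y] @ w)" by simp
  also have "\<dots> = conv (\<lambda>n. eps n [x, y]) (\<lambda>n. eps n w) m" by (rule eps_product)
  also have "\<dots> = conv (\<lambda>n. if n = [] then 1 else 0) (\<lambda>n. eps n w) m"
    using eps_pair_cancel[OF c] by (simp add: eps_Nil_word)
  finally show ?thesis by (simp add: conv_delta)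
qed

lemma eps_Fr: "eps m (Fr x r) = eps m (x # r)"
  by (cases r) (auto simp: Fr_def eps_cancel)

lemma eps_red: "eps m (red w) = eps m w"
proof (induction w arbitrary: m)
  case Nil then show ?case by simp
next
  case (Cons x w)
  then show ?case by (simp add: red_Cons eps_Fr) (rule eps_Cons_cong, simp)
qed

lemma eps_len1_append: "eps [g] (u @ v) = eps [g] u + eps [g] v"
  by (simp add: eps_product)

lemma eps_len1_single: "eps [h] [(g, e)] = (if h = g then (if e then -1 else 1) else 0)"
  by (cases e) simp_all

lemma eps_len1_winv: "eps [g] (winv u) = - eps [g] u"
proof -
  have "eps [g] (winv u @ u) = eps [g] (red (winv u @ u))" by (simp add: eps_red)
  then have "eps [g] (winv u) + eps [g] u = 0" by (simp add: red_winv_w eps_len1_append)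
  then show ?thesis by simp
qed

lemma eps_len1_Cons: "eps [h] ((g, e) # w) = (if h = g then (if e then -1 else 1) else 0) + eps [h] w"
  using eps_len1_append[of h "[(g, e)]" w] eps_len1_single by simp

lemma eps_len1_img: "eps [h] (img f x) = (if snd x then - eps [h] (f (fst x)) else eps [h] (f (fst x)))"
  by (simp add: img_def eps_len1_winv)

lemma eps_len1_subst:
  assumes "\<forall>x \<in> set w. fst x < 2"
  shows "eps [h] (subst f w) = eps [0] w * eps [h] (f 0) + eps [1] w * eps [h] (f 1)"
  using assms
proof (induction w)
  case Nil then show ?case by simp
next
  case (Cons x w)
  obtain g e where x: "x = (g, e)" by force
  have g: "g = 0 \<or> g = 1" using Cons.prems x by auto
  have "eps [h] (subst f (x # w)) = eps [h] (img f x) + eps [h] (subst f w)"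
    by (simp add: subst_Cons eps_red eps_len1_append)
  then show ?case using Cons g x by (auto simp: eps_len1_img eps_len1_Cons algebra_simps)
qed

lemma eps_len1_notin: "(\<forall>x \<in> set w. fst x \<noteq> h) \<Longrightarrow> eps [h] w = 0"
proof (induction w)
  case Nil then show ?case by simp
next
  case (Cons x w)
  then show ?case by (cases x) (auto simp: eps_len1_Cons)
qed



fun alt :: "nat list \<Rightarrow> bool" where
  "alt [] = True"
| "alt [x] = True"
| "alt (x # y # r) = (x \<noteq> y \<and> alt (y # r))"

lemma alt_tl: "alt (x # r) \<Longrightarrow> alt r"
  by (cases r) auto

lemma alt_Cons: "alt (x # r) \<longleftrightarrow> alt r \<and> (r = [] \<or> hd r \<noteq> x)"
  by (cases r) auto

lemma alt_remdups_adj: "alt (remdups_adj l)"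
proof (induction l rule: remdups_adj.induct)
  case 1 then show ?case by simp
next
  case (2 x) then show ?case by simp
next
  case (3 x y xs)
  then show ?case by (auto simp: alt_Cons)
qed

lemma remdups_adj_Cons_drop: "remdups_adj (g # l) = g # remdups_adj (dropWhile (\<lambda>h. h = g) l)"
proof (induction l)
  case Nil then show ?case by simp
next
  case (Cons h l)
  then show ?case by (cases "h = g") simp_all
qed

lemma remdups_adj_len_Cons: "length (remdups_adj l) \<le> length (remdups_adj (g # l))"
  by (auto simp: remdups_adj_Cons split: list.splits)

definition runs :: "word \<Rightarrow> nat" where "runs w = length (remdups_adj (map fst w))"

lemma runs_Cons: "runs (x # w) = Suc (runs (dropWhile (\<lambda>y. fst y = fst x) w))"
  by (simp add: runs_def remdups_adj_Cons_drop dropWhile_map comp_def)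

lemma runs_Cons_ge: "runs w \<le> runs (x # w)"
  by (simp add: runs_def remdups_adj_len_Cons)

lemma eps_Cons_nohead: "m = [] \<or> hd m \<noteq> fst x \<Longrightarrow> eps m (x # w) = eps m w"
  by (cases m; cases x; cases "snd x") auto

lemma eps_Cons_head: "m = [] \<or> hd m \<noteq> g \<Longrightarrow>
   eps (g # m) ((g, e) # w) = eps (g # m) w + (if e then -1 else 1) * eps m w"
  by (cases e) (auto simp: eps_Cons_nohead)

lemma eps_dropWhile: "m = [] \<or> hd m \<noteq> g \<Longrightarrow> eps m w = eps m (dropWhile (\<lambda>y. fst y = g) w)"
proof (induction w)
  case Nil then show ?case by simp
next
  case (Cons x w)
  then show ?case by (cases "fst x = g") (auto simp: eps_Cons_nohead)
qed

lemma eps_runs_zero: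
  "alt m \<Longrightarrow> runs w < length m \<Longrightarrow> eps m w = 0"
proof (induction "length w" arbitrary: w m rule: less_induct)
  case less
  show ?case
  proof (cases w)
    case Nil
    then obtain h m' where "m = h # m'" using less.prems by (cases m) auto
    then show ?thesis using Nil by simp
  next
    case (Cons x w')
    obtain h m' where m: "m = h # m'" using less.prems by (cases m) auto
    show ?thesis
    proof (cases "h = fst x")
      case False
      then have "eps m w = eps m w'" using Cons m by (simp add: eps_Cons_nohead)
      moreover have "eps m w' = 0"
        using less.hyps[of w' m] less.prems runs_Cons_ge[of w' x] Cons by simp
      ultimately show ?thesis by simp
    next
      case True
      obtain g e where x: "x = (g, e)" by force
      have hm': "m' = [] \<or> hd m' \<noteq> g" using less.prems(1) m True x by (auto simp: alt_Cons)
      have "eps m w = eps (g # m') w' + (if e then -1 else 1) * eps m' w'"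
        using eps_Cons_head[OF hm'] Cons m True x by simp
      moreover have "eps (g # m') w' = 0"
        using less.hyps[of w' "g # m'"] less.prems runs_Cons_ge[of w' x] Cons m True x by simp
      moreover have "eps m' w' = 0"
      proof -
        let ?r = "dropWhile (\<lambda>y. fst y = g) w'"
        have "eps m' w' = eps m' ?r" using eps_dropWhile[OF hm'] .
        moreover have "length ?r < length w" using Cons length_dropWhile_le[of "\<lambda>y. fst y = g" w'] by simp
        moreover have "runs ?r < length m'" using runs_Cons[of x w'] less.prems Cons m x by simp
        moreover have "alt m'" using less.prems(1) m alt_tl by blast
        ultimately show ?thesis using less.hyps by simp
      qed
      ultimately show ?thesis by simp
    qed
  qed
qed

lemma reduced_takeWhile: "reduced (x # w) \<Longrightarrow> y \<in> set (takeWhile (\<lambda>y. fst y = fst x) w) \<Longrightarrow> y = x"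
proof (induction w)
  case Nil then show ?case by simp
next
  case (Cons z w)
  show ?case
  proof (cases "fst z = fst x")
    case True
    then have "z = x" using Cons.prems(1) by (cases z; cases x) (auto simp: cnc_def)
    then show ?thesis using Cons by (auto dest: reduced_tl)
  next
    case False then show ?thesis using Cons.prems by simp
  qed
qed

lemma takeWhile_replicate: "(\<And>y. y \<in> set l \<Longrightarrow> y = x) \<Longrightarrow> l = replicate (length l) x"
  by (simp add: replicate_length_same)

lemma eps_replicate_nohead: "m = [] \<or> hd m \<noteq> g \<Longrightarrow> eps m (replicate k (g, e) @ r) = eps m r"
  by (induction k) (auto simp: eps_Cons_nohead)

lemma eps_replicate_head: "m = [] \<or> hd m \<noteq> g \<Longrightarrow>
  eps (g # m) (replicate k (g, e) @ r) = eps (g # m) r + (if e then -1 else 1) * int k * eps m r"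
proof (induction k)
  case 0 then show ?case by simp
next
  case (Suc k)
  have "eps (g # m) (replicate (Suc k) (g, e) @ r)
     = eps (g # m) (replicate k (g, e) @ r) + (if e then -1 else 1) * eps m (replicate k (g, e) @ r)"
    using eps_Cons_head[OF Suc.prems] by simp
  then show ?case using Suc eps_replicate_nohead[OF Suc.prems] by (simp add: algebra_simps)
qed

lemma eps_syllable_nonzero:
  "reduced z \<Longrightarrow> z \<noteq> [] \<Longrightarrow> eps (remdups_adj (map fst z)) z \<noteq> 0"
proof (induction "length z" arbitrary: z rule: less_induct)
  case less
  obtain x w where z: "z = x # w" using less.prems by (cases z) auto
  obtain g e where x: "x = (g, e)" by force
  let ?p = "takeWhile (\<lambda>y. fst y = g) w"
  let ?r = "dropWhile (\<lambda>y. fst y = g) w"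
  have w: "w = ?p @ ?r" by simp
  have p: "?p = replicate (length ?p) x"
    using reduced_takeWhile[of x w] less.prems z x by (intro takeWhile_replicate) auto
  have zz: "z = replicate (Suc (length ?p)) (g, e) @ ?r"
    using z x p w by (metis append_Cons replicate_Suc)
  let ?mr = "remdups_adj (map fst ?r)"
  have mz: "remdups_adj (map fst z) = g # ?mr"
    using z x by (simp add: remdups_adj_Cons_drop dropWhile_map comp_def)
  have hr: "?mr = [] \<or> hd ?mr \<noteq> g"
  proof (cases "?r = []")
    case True then show ?thesis by simp
  next
    case False
    then have "fst (hd ?r) \<noteq> g" using hd_dropWhile by blast
    then show ?thesis using False by (simp add: hd_map)
  qed
  have "eps (g # ?mr) z = eps (g # ?mr) ?r + (if e then -1 else 1) * int (Suc (length ?p)) * eps ?mr ?r"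
    unfolding zz by (rule eps_replicate_head[OF hr])
  moreover have "eps (g # ?mr) ?r = 0"
  proof (rule eps_runs_zero)
    show "alt (g # ?mr)" using hr alt_remdups_adj by (auto simp: alt_Cons)
    show "runs ?r < length (g # ?mr)" by (simp add: runs_def)
  qed
  moreover have "eps ?mr ?r \<noteq> 0"
  proof (cases "?r = []")
    case True then show ?thesis by (simp del: dropWhile_eq_Nil_conv)
  next
    case False
    have "reduced ?r" using less.prems(1) z w reduced_append[of ?p ?r]
      by (metis reduced_tl)
    moreover have "length ?r < length z" using z length_dropWhile_le[of "\<lambda>y. fst y = g" w] by simp
    ultimately show ?thesis using less.hyps False by blast
  qed
  ultimately show ?case using mz by simp
qed

lemma eps_trivial: "reduced z \<Longrightarrow> (\<And>m. eps m z = eps m []) \<Longrightarrow> z = []"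
proof (rule ccontr)
  assume r: "reduced z" and e: "\<And>m. eps m z = eps m []" and nz: "z \<noteq> []"
  have "eps (remdups_adj (map fst z)) z \<noteq> 0" using eps_syllable_nonzero[OF r nz] .
  moreover have "remdups_adj (map fst z) \<noteq> []" using nz by simp
  ultimately show False using e[of "remdups_adj (map fst z)"] by (simp add: eps_Nil_word)
qed

lemma eps_inj:
  assumes "reduced u" "reduced u'" "\<And>m. eps m u = eps m u'"
  shows "u = u'"
proof -
  let ?z = "red (u @ winv u')"
  have e: "(\<lambda>n. eps n u) = (\<lambda>n. eps n u')" using assms(3) by auto
  have "eps m ?z = eps m []" for m
  proof -
    have "eps m ?z = conv (\<lambda>n. eps n u) (\<lambda>n. eps n (winv u')) m" by (simp add: eps_red eps_product)
    also have "\<dots> = conv (\<lambda>n. eps n u') (\<lambda>n. eps n (winv u')) m" by (simp only: e)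
    also have "\<dots> = eps m (red (u' @ winv u'))" by (simp add: eps_red eps_product)
    finally show ?thesis by (simp add: red_w_winv)
  qed
  then have z: "?z = []" using eps_trivial reduced_red by blast
  have "u = red (u @ (winv u' @ u'))"
    using assms(1) red_Nil_append[of "winv u' @ u'" u] red_winv_w red_reduced by simp
  also have "\<dots> = red (?z @ u')" using red_append_left[of "u @ winv u'" u'] by simp
  also have "\<dots> = u'" using z assms(2) red_reduced by simp
  finally show ?thesis .
qed



definition agree :: "nat \<Rightarrow> (nat list \<Rightarrow> int) \<Rightarrow> (nat list \<Rightarrow> int) \<Rightarrow> bool" where
  "agree d F F' \<longleftrightarrow> (\<forall>n. length n \<le> d \<longrightarrow> F n = F' n)"

lemma conv_agree: "agree (length n) F F' \<Longrightarrow> agree (length n) G G' \<Longrightarrow> conv F G n = conv F' G' n"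
proof (induction n arbitrary: F F')
  case Nil then show ?case by (simp add: agree_def)
next
  case (Cons h m)
  have a1: "agree (length m) (\<lambda>x. F (h # x)) (\<lambda>x. F' (h # x))"
    using Cons.prems(1) by (simp add: agree_def)
  have a2: "agree (length m) G G'" using Cons.prems(2) by (simp add: agree_def)
  have "F [] = F' []" "G (h # m) = G' (h # m)" using Cons.prems by (auto simp: agree_def)
  then show ?case using Cons.IH[OF a1 a2] by simp
qed

lemma conv_add2: "conv F (\<lambda>n. G n + G' n) m = conv F G m + conv F G' m"
  by (induction m arbitrary: F) (simp_all add: algebra_simps)

lemma conv_lead: "(\<And>n'. length n' < length n \<Longrightarrow> F n' = 0) \<Longrightarrow> conv F G n = F n * G []"
proof (induction n arbitrary: F)
  case Nil then show ?case by simp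
next
  case (Cons h m)
  have "conv (\<lambda>x. F (h # x)) G m = F (h # m) * G []"
    using Cons.prems by (intro Cons.IH) simp
  moreover have "F [] = 0" using Cons.prems by simp
  ultimately show ?case by simp
qed

lemma conv_allzero: "(\<And>n'. length n' \<le> length m \<Longrightarrow> G n' = 0) \<Longrightarrow> conv F G m = 0"
proof (induction m arbitrary: F)
  case Nil then show ?case by simp
next
  case (Cons h m)
  then show ?case by simp
qed

lemma conv_tail: "(\<And>n'. length n' < length n \<Longrightarrow> G n' = 0) \<Longrightarrow> conv F G n = F [] * G n"
proof (cases n)
  case Nil then show ?thesis by simp
next
  case (Cons h m)
  assume a: "\<And>n'. length n' < length n \<Longrightarrow> G n' = 0"
  have "conv (\<lambda>x. F (h # x)) G m = 0" using a Cons by (intro conv_allzero) simp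
  then show ?thesis using Cons by simp
qed

lemma eps_pos_ge2: "2 \<le> length n \<Longrightarrow> eps n [(g, False)] = 0"
proof -
  assume "2 \<le> length n"
  then obtain h h' n' where "n = h # h' # n'" by (cases n; cases "tl n") auto
  then show ?thesis by simp
qed

lemma conv_unique:
  assumes X0: "X [] = 1" and c: "\<And>n. length n \<le> d \<Longrightarrow> conv E X n = conv E' X n"
  shows "length n \<le> d \<Longrightarrow> E n = E' n"
proof (induction "length n" arbitrary: n rule: less_induct)
  case less
  have "conv (\<lambda>n. E n - E' n) X n = (E n - E' n) * X []"
    using less by (intro conv_lead) simp
  moreover have "conv (\<lambda>n. E n - E' n) X n = 0" using c[OF less.prems] by (simp add: conv_diff)
  ultimately show ?case using X0 by simp
qed

lemma img_inv_trunc: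
  assumes d: "2 \<le> d" and H: "\<And>n. length n < d \<Longrightarrow> eps n X = eps n [(g, False)]"
    and n: "length n \<le> d"
  shows "eps n (winv X) = eps n [(g, True)] - (if length n = d then eps n X else 0)"
proof -
  define Hd where "Hd = (\<lambda>n. if length n = d then eps n X else 0)"
  have aX: "eps n X = eps n [(g, False)] + Hd n" if "length n \<le> d" for n
    using that H[of n] eps_pos_ge2[of n g] d by (cases "length n = d") (auto simp: Hd_def)
  have c: "conv (\<lambda>n. eps n (winv X)) (\<lambda>n. eps n X) n =
           conv (\<lambda>n. eps n [(g, True)] - Hd n) (\<lambda>n. eps n X) n" if ln: "length n \<le> d" for n
  proof -
    have "conv (\<lambda>n. eps n (winv X)) (\<lambda>n. eps n X) n = eps n (winv X @ X)"
      by (simp add: eps_product)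
    also have "\<dots> = eps n []" using eps_red[of n "winv X @ X"] by (simp add: red_winv_w)
    finally have L: "conv (\<lambda>n. eps n (winv X)) (\<lambda>n. eps n X) n = eps n []" .
    have "conv Hd (\<lambda>n. eps n X) n = Hd n * eps [] X"
      using ln by (intro conv_lead) (auto simp: Hd_def)
    then have R1: "conv Hd (\<lambda>n. eps n X) n = Hd n" by simp
    have "conv (\<lambda>n. eps n [(g, True)]) (\<lambda>n. eps n X) n
        = conv (\<lambda>n. eps n [(g, True)]) (\<lambda>n. eps n [(g, False)] + Hd n) n"
      using ln aX by (intro conv_agree) (auto simp: agree_def)
    also have "\<dots> = conv (\<lambda>n. eps n [(g, True)]) (\<lambda>n. eps n [(g, False)]) n
                  + conv (\<lambda>n. eps n [(g, True)]) Hd n" by (rule conv_add2)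
    also have "conv (\<lambda>n. eps n [(g, True)]) (\<lambda>n. eps n [(g, False)]) n = eps n ([(g, True)] @ [(g, False)])"
      by (simp only: eps_product)
    also have "\<dots> = eps n []" using eps_pair_cancel[of "(g, True)" "(g, False)" n] by (simp add: cnc_def)
    also have "conv (\<lambda>n. eps n [(g, True)]) Hd n = eps [] [(g, True)] * Hd n"
      using ln by (intro conv_tail) (auto simp: Hd_def)
    finally have R2: "conv (\<lambda>n. eps n [(g, True)]) (\<lambda>n. eps n X) n = eps n [] + Hd n" by simp
    show ?thesis using L R1 R2 by (simp add: conv_diff)
  qed
  have "eps n (winv X) = eps n [(g, True)] - Hd n"
    using conv_unique[of "\<lambda>n. eps n X" d "\<lambda>n. eps n (winv X)" "\<lambda>n. eps n [(g, True)] - Hd n", OF _ c n]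
    by simp
  then show ?thesis by (simp add: Hd_def)
qed

lemma degree_step:
  assumes d: "2 \<le> d"
    and H: "\<And>g n. g < 2 \<Longrightarrow> length n < d \<Longrightarrow> eps n (f g) = eps n [(g, False)]"
    and w: "\<forall>x \<in> set w. fst x < 2"
  shows "length n \<le> d \<Longrightarrow> eps n (concat (map (img f) w)) = eps n w +
     (if length n = d then eps [0] w * eps n (f 0) + eps [1] w * eps n (f 1) else 0)"
  using w
proof (induction w arbitrary: n)
  case Nil then show ?case by (simp add: eps_Nil_word)
next
  case (Cons x w)
  obtain g e where x: "x = (g, e)" by force
  have g: "g < 2" using Cons.prems x by auto
  define s :: int where "s = (if e then -1 else 1)"
  define Hx where "Hx = (\<lambda>n. if length n = d then s * eps n (f g) else 0)"
  define Hr where "Hr = (\<lambda>n. if length n = d then eps [0] w * eps n (f 0) + eps [1] w * eps n (f 1) else 0)"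
  have I1: "eps n' (img f x) = eps n' [x] + Hx n'" if "length n' \<le> d" for n'
  proof (cases e)
    case False
    then show ?thesis using that H[OF g, of n'] eps_pos_ge2[of n' g] d x
      by (cases "length n' = d") (auto simp: img_def Hx_def s_def)
  next
    case True
    have "eps n' (winv (f g)) = eps n' [(g, True)] - (if length n' = d then eps n' (f g) else 0)"
      using img_inv_trunc[OF d _ that] H[OF g] by blast
    then show ?thesis using True x by (simp add: img_def Hx_def s_def)
  qed
  have I2: "eps n' (concat (map (img f) w)) = eps n' w + Hr n'" if "length n' \<le> d" for n'
    using Cons.IH[of n'] Cons.prems that by (simp add: Hr_def)
  have "eps n (concat (map (img f) (x # w))) = conv (\<lambda>n. eps n (img f x)) (\<lambda>n. eps n (concat (map (img f) w))) n"
    by (simp add: eps_product)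
  also have "\<dots> = conv (\<lambda>n. eps n [x] + Hx n) (\<lambda>n. eps n w + Hr n) n"
    using I1 I2 Cons.prems(1) by (intro conv_agree) (auto simp: agree_def)
  also have "\<dots> = conv (\<lambda>n. eps n [x]) (\<lambda>n. eps n w) n + conv (\<lambda>n. eps n [x]) Hr n
                  + (conv Hx (\<lambda>n. eps n w) n + conv Hx Hr n)"
    by (simp add: conv_add conv_add2)
  also have "conv (\<lambda>n. eps n [x]) (\<lambda>n. eps n w) n = eps n (x # w)"
    using eps_product[of n "[x]" w] by simp
  also have "conv (\<lambda>n. eps n [x]) Hr n = eps [] [x] * Hr n"
    using Cons.prems(1) by (intro conv_tail) (auto simp: Hr_def)
  also have "conv Hx (\<lambda>n. eps n w) n = Hx n * eps [] w"
    using Cons.prems(1) by (intro conv_lead) (auto simp: Hx_def)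
  also have "conv Hx Hr n = Hx n * Hr []"
    using Cons.prems(1) by (intro conv_lead) (auto simp: Hx_def)
  finally have E: "eps n (concat (map (img f) (x # w))) = eps n (x # w) + Hr n + Hx n"
    using d by (simp add: Hr_def)
  have e0: "eps [0] (x # w) = (if g = 0 then s else 0) + eps [0] w"
    using x eps_len1_Cons[of 0 g e w] by (simp add: s_def)
  have e1: "eps [1] (x # w) = (if g = 1 then s else 0) + eps [1] w"
    using x eps_len1_Cons[of 1 g e w] by (simp add: s_def)
  have g01: "g = 0 \<or> g = 1" using g by auto
  show ?case using E e0 e1 g01 by (elim disjE) (auto simp: Hr_def Hx_def algebra_simps)
qed



lemma subst_degree:
  assumes d: "2 \<le> d"
    and H: "\<And>g n. g < 2 \<Longrightarrow> length n < d \<Longrightarrow> eps n (f g) = eps n [(g, False)]"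
    and w: "\<forall>x \<in> set w. fst x < 2" and n: "length n \<le> d"
  shows "eps n (subst f w) = eps n w +
     (if length n = d then eps [0] w * eps n (f 0) + eps [1] w * eps n (f 1) else 0)"
  using degree_step[OF d H w n] by (simp add: subst_alt eps_red)

lemma words2_gens: "w \<in> words 2 \<Longrightarrow> \<forall>x \<in> set w. fst x < 2"
  by (simp add: words_def)

lemma magnus_fix:
  assumes uv: "u \<in> words 2" "v \<in> words 2"
    and t0: "subst (sub2 u v) (subst (sub2 u v) (subst (sub2 u v) [(0, False)])) = [(0, False)]"
    and t1: "subst (sub2 u v) (subst (sub2 u v) (subst (sub2 u v) [(1, False)])) = [(1, False)]"
    and ia: "eps [0] u = 1" "eps [1] u = 0" "eps [0] v = 0" "eps [1] v = 1"
  shows "u = [(0, False)] \<and> v = [(1, False)]"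
proof -
  define f where "f = sub2 u v"
  have f0: "f 0 = u" and f1: "f 1 = v" by (simp_all add: f_def sub2_def)
  have fw: "g < 2 \<Longrightarrow> f g \<in> words 2" for g using uv by (cases "g = 0") (auto simp: f_def sub2_def)
  have gw: "subst f w \<in> words 2" for w unfolding f_def by (rule subst_words2[OF uv])
  have tt: "g < 2 \<Longrightarrow> subst f (subst f (subst f [(g, False)])) = [(g, False)]" for g
  proof -
    assume "g < 2"
    then have "g = 0 \<or> g = 1" by auto
    then show ?thesis using t0 t1 by (auto simp: f_def)
  qed
  have low: "eps n (f g) = eps n [(g, False)]" if "g < 2" "length n < 2" for g n
  proof (cases n)
    case Nil then show ?thesis by simp
  next
    case (Cons h n')
    then have n: "n = [h]" using that by simp
    show ?thesis
    proof (cases "h < 2")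
      case True
      then have "h = 0 \<or> h = 1" by auto
      moreover have "g = 0 \<or> g = 1" using that by auto
      ultimately show ?thesis using ia n f0 f1 by (auto simp: eps_len1_single)
    next
      case False
      have "eps [h] (f g) = 0"
        using fw[OF that(1)] False by (intro eps_len1_notin) (auto simp: words_def)
      then show ?thesis using n False that(1) by (simp add: eps_len1_single)
    qed
  qed
  have main: "\<forall>g n. g < 2 \<longrightarrow> length n < d \<longrightarrow> eps n (f g) = eps n [(g, False)]" if "2 \<le> d" for d
    using that
  proof (induction d rule: nat_induct_at_least)
    case base then show ?case using low by blast
  next
    case (Suc d)
    have H: "\<And>g n. g < 2 \<Longrightarrow> length n < d \<Longrightarrow> eps n (f g) = eps n [(g, False)]"
      using Suc.IH by blast
    show ?case
    proof (intro allI impI)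
      fix g :: nat and n :: "nat list" assume g: "g < 2" and ln: "length n < Suc d"
      show "eps n (f g) = eps n [(g, False)]"
      proof (cases "length n < d")
        case True then show ?thesis using H g by blast
      next
        case False
        then have lnd: "length n = d" using ln by simp
        have S: "eps n (subst f w) = eps n w + (eps [0] w * eps n (f 0) + eps [1] w * eps n (f 1))"
          if "w \<in> words 2" for w
          using subst_degree[OF Suc.hyps H words2_gens[OF that], of n] lnd by simp
        have L1: "eps [k] (subst f w) = eps [k] w" if "w \<in> words 2" for w k
          using subst_degree[OF Suc.hyps H words2_gens[OF that], of "[k]"] Suc.hyps by simp
        define a where "a = [(g, False)]"
        have aw: "a \<in> words 2" using g by (simp add: a_def)
        have e0: "eps [0] a = (if g = 0 then 1 else 0)" and e1: "eps [1] a = (if g = 1 then 1 else 0)"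
          by (simp_all add: a_def eps_len1_single)
        define K where "K = eps [0] a * eps n (f 0) + eps [1] a * eps n (f 1)"
        have s1: "eps n (subst f a) = eps n a + K" using S[OF aw] by (simp add: K_def)
        have s2: "eps n (subst f (subst f a)) = eps n a + 2 * K"
          using S[OF gw] s1 L1[OF aw] by (simp add: K_def)
        have s3: "eps n (subst f (subst f (subst f a))) = eps n a + 3 * K"
          using S[OF gw] s2 L1[OF gw] L1[OF aw] by (simp add: K_def)
        then have "K = 0" using tt[OF g] by (simp add: a_def)
        moreover have "g = 0 \<or> g = 1" using g by auto
        ultimately have "eps n (f g) = 0" using e0 e1 by (auto simp: K_def)
        moreover have "eps n [(g, False)] = 0" using eps_pos_ge2[of n g] lnd Suc.hyps by simp
        ultimately show ?thesis by simp
      qed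
    qed
  qed
  have all: "eps n (f g) = eps n [(g, False)]" if "g < 2" for g n
    using main[of "length n + 2"] that by simp
  have "u = [(0, False)]"
    using eps_inj[of u "[(0, False)]"] all[of 0] f0 uv(1) by (simp add: words_def)
  moreover have "v = [(1, False)]"
    using eps_inj[of v "[(1, False)]"] all[of 1] f1 uv(2) by (simp add: words_def)
  ultimately show ?thesis by simp
qed



lemma int_sys:
  fixes x y z w p q r s :: int
  assumes e1: "x = - x * x + z * y" and e2: "- z = - x * z + z * w"
    and e3: "- y = - y * x + w * y" and e4: "w = - y * z + w * w"
    and d1: "x * p + y * q = 1" and d2: "z * p + w * q = 0"
    and d3: "x * r + y * s = 0" and d4: "z * r + w * s = 1"
  shows "x = -1 \<and> y = 0 \<and> z = 0 \<and> w = 1"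
proof -
  have det: "(x * w - y * z) * (p * s - q * r) = 1"
  proof -
    have "(x * w - y * z) * (p * s - q * r) = (x * p + y * q) * (z * r + w * s) - (x * r + y * s) * (z * p + w * q)"
      by (simp add: algebra_simps)
    then show ?thesis using d1 d2 d3 d4 by simp
  qed
  have y0: "y * (w - x + 1) = 0" using e3 by (simp add: algebra_simps)
  have z0: "z * (w - x + 1) = 0" using e2 by (simp add: algebra_simps)
  show ?thesis
  proof (cases "w - x + 1 = 0")
    case True
    then have wx: "w = x - 1" by simp
    have "x + w = (w - x) * (w + x)" using e1 e4 by (simp add: algebra_simps)
    then have "x + w = - (w + x)" using wx by simp
    then have "2 * x = 1" using wx by simp
    then show ?thesis by presburger
  next
    case False
    then have "y = 0" "z = 0" using y0 z0 by simp_all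
    then have xx: "x * (x + 1) = 0" and ww: "w * (w - 1) = 0" using e1 e4 by (simp_all add: algebra_simps)
    have "x * w \<noteq> 0" using det \<open>y = 0\<close> by auto
    then have "x \<noteq> 0" "w \<noteq> 0" by auto
    moreover have "x = 0 \<or> x + 1 = 0" using xx by (simp only: mult_eq_0_iff)
    moreover have "w = 0 \<or> w - 1 = 0" using ww by (simp only: mult_eq_0_iff)
    ultimately have "x = -1" "w = 1" by auto
    then show ?thesis using \<open>y = 0\<close> \<open>z = 0\<close> by simp
  qed
qed

lemma red_single[simp]: "red [x] = [x]" by (simp add: red_Cons Fr_def)

lemma surj_obtain: "k ` W = W \<Longrightarrow> z \<in> W \<Longrightarrow> \<exists>y \<in> W. k y = z"
proof -
  assume a: "k ` W = W" "z \<in> W"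
  then have "z \<in> k ` W" by simp
  then show ?thesis by blast
qed

definition betaA :: "word \<Rightarrow> word" where "betaA = subst (sub2 [(0, True)] [(1, False)])"

lemma betaA_words: "betaA w \<in> words 2"
  unfolding betaA_def by (rule subst_words2) simp_all

lemma betaA_betaA: "w \<in> words 2 \<Longrightarrow> betaA (betaA w) = w"
proof -
  assume w: "w \<in> words 2"
  have "betaA (betaA w) = subst (\<lambda>i. betaA (sub2 [(0, True)] [(1, False)] i)) w"
    unfolding betaA_def by (rule subst_subst)
  also have "\<dots> = red w"
  proof (rule subst_id)
    fix x assume "x \<in> set w"
    then have "fst x = 0 \<or> fst x = 1" using w by (auto simp: words_def)
    then show "betaA (sub2 [(0, True)] [(1, False)] (fst x)) = [(fst x, False)]"
      by (auto simp: betaA_def sub2_def winv_alt flp_def)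
  qed
  finally show ?thesis using words_red[OF w] by simp
qed

lemma len1_betaA: "w \<in> words 2 \<Longrightarrow> eps [0] (betaA w) = - eps [0] w \<and> eps [1] (betaA w) = eps [1] w"
  unfolding betaA_def using eps_len1_subst[OF words2_gens]
  by (simp add: sub2_def eps_len1_single)

lemma len1_subst2: "w \<in> words 2 \<Longrightarrow>
   eps [k] (subst (sub2 C D) w) = eps [0] w * eps [k] C + eps [1] w * eps [k] D"
  using eps_len1_subst[OF words2_gens] by (simp add: sub2_def)

lemma lemmaL:
  assumes CD: "C \<in> words 2" "D \<in> words 2" and aut: "is_aut2 C D"
    and rel: "\<And>w. w \<in> words 2 \<Longrightarrow> betaA (subst (sub2 C D) (betaA w)) = subst (sub2 C D) (betaA (subst (sub2 C D) w))"
  shows "C = [(0, True)] \<and> D = [(1, False)]"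
proof -
  define k where "k = subst (sub2 C D)"
  define W where "W = words 2"
  have kW: "k w \<in> W" for w unfolding k_def W_def using CD by (rule subst_words2)
  have bW: "betaA w \<in> W" for w unfolding W_def by (rule betaA_words)
  have bb: "w \<in> W \<Longrightarrow> betaA (betaA w) = w" for w unfolding W_def by (rule betaA_betaA)
  have R: "w \<in> W \<Longrightarrow> betaA (k (betaA w)) = k (betaA (k w))" for w using rel unfolding k_def W_def by blast
  have bij: "bij_betw k W W" using aut unfolding is_aut2_def k_def W_def .
  then have inj: "inj_on k W" and surj: "k ` W = W" by (auto simp: bij_betw_def)
  have T: "k (k (betaA (k (k (betaA w))))) = betaA (k (k (betaA w)))" if w: "w \<in> W" for w
  proof -
    have "betaA (k (betaA (k (betaA w)))) = k (betaA (k (k (betaA w))))"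
      using R[OF kW] by simp
    then have A: "k (betaA (k (betaA (k (betaA w))))) = k (k (betaA (k (k (betaA w)))))" by simp
    have "k (betaA (k (betaA (k (betaA w))))) = betaA (k (betaA (betaA (k (betaA w)))))"
      using R[OF bW, of "k (betaA w)"] by simp
    also have "\<dots> = betaA (k (k (betaA w)))" using bb[OF kW] by simp
    finally show ?thesis using A by simp
  qed
  have kk: "k (k t) = t" if t: "t \<in> W" for t
  proof -
    have P: "k (k (betaA z)) = betaA z" if z: "z \<in> W" for z
    proof -
      obtain y1 where y1: "y1 \<in> W" "k y1 = z" using surj_obtain[OF surj z] by blast
      obtain y where y: "y \<in> W" "k y = y1" using surj_obtain[OF surj y1(1)] by blast
      have "k (k (betaA (k (k (betaA (betaA y)))))) = betaA (k (k (betaA (betaA y))))"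
        using T[OF bW] by simp
      then show ?thesis using bb[OF y(1)] y y1 by simp
    qed
    have "k (k (betaA (betaA t))) = betaA (betaA t)" using P[OF bW] .
    then show ?thesis using bb[OF t] by simp
  qed
  define u where "u = betaA C"
  define v where "v = betaA D"
  have th: "betaA (k w) = subst (sub2 u v) w" for w
  proof -
    have "betaA (k w) = subst (\<lambda>i. betaA (sub2 C D i)) w"
      unfolding betaA_def k_def by (rule subst_subst)
    also have "(\<lambda>i. betaA (sub2 C D i)) = sub2 u v"
      by (auto simp: u_def v_def sub2_def fun_eq_iff)
    finally show ?thesis .
  qed
  have th3: "betaA (k (betaA (k (betaA (k w))))) = w" if w: "w \<in> W" for w
  proof -
    have "k (betaA (k (betaA (k w)))) = betaA (k (betaA (betaA (k w))))"
      using R[OF bW, of "k w"] by simp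
    also have "\<dots> = betaA (k (k w))" using bb[OF kW] by simp
    finally show ?thesis using kk[OF w] bb[OF w] by simp
  qed
  have aW: "[(0, False)] \<in> W" "[(1, False)] \<in> W" by (simp_all add: W_def)
  have t0: "subst (sub2 u v) (subst (sub2 u v) (subst (sub2 u v) [(0, False)])) = [(0, False)]"
    using th3[OF aW(1)] by (simp add: th)
  have t1: "subst (sub2 u v) (subst (sub2 u v) (subst (sub2 u v) [(1, False)])) = [(1, False)]"
    using th3[OF aW(2)] by (simp add: th)
  have kl: "eps [j] (k w) = eps [0] w * eps [j] C + eps [1] w * eps [j] D" if "w \<in> W" for w j
    using len1_subst2[of w j C D] that unfolding k_def W_def by simp
  have bl0: "eps [0] (betaA w) = - eps [0] w" and bl1: "eps [1] (betaA w) = eps [1] w" if "w \<in> W" for w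
    using len1_betaA that unfolding W_def by auto
  define x where "x = eps [0] C"
  define z where "z = eps [1] C"
  define y where "y = eps [0] D"
  define ww where "ww = eps [1] D"
  have ka: "k [(0, False)] = C" and kb: "k [(1, False)] = D"
    using CD by (simp_all add: k_def sub2_def words_red)
  have ba: "betaA [(0, False)] = [(0, True)]" and bbb: "betaA [(1, False)] = [(1, False)]"
    by (simp_all add: betaA_def sub2_def winv_alt flp_def)
  have Cw: "C \<in> W" and Dw: "D \<in> W" using CD by (simp_all add: W_def)
  have a1: "[(0, True)] \<in> W" by (simp add: W_def)
  have RA: "betaA (k (betaA [(0, False)])) = k (betaA (k [(0, False)]))" using R[OF aW(1)] .
  have RB: "betaA (k (betaA [(1, False)])) = k (betaA (k [(1, False)]))" using R[OF aW(2)] .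
  have "eps [0] (betaA (k [(0, True)])) = eps [0] (k (betaA C))" using RA ba ka by simp
  then have E1: "x = - x * x + z * y"
    using bl0[OF kW] kl[OF a1] kl[OF bW] bl0[OF Cw] bl1[OF Cw]
    by (simp add: x_def y_def z_def ww_def eps_len1_single algebra_simps)
  have "eps [1] (betaA (k [(0, True)])) = eps [1] (k (betaA C))" using RA ba ka by simp
  then have E2: "- z = - x * z + z * ww"
    using bl1[OF kW] kl[OF a1] kl[OF bW] bl0[OF Cw] bl1[OF Cw]
    by (simp add: x_def y_def z_def ww_def eps_len1_single algebra_simps)
  have "eps [0] (betaA (k [(1, False)])) = eps [0] (k (betaA D))" using RB bbb kb by simp
  then have E3: "- y = - y * x + ww * y"
    using bl0[OF kW] kl[OF aW(2)] kl[OF bW] bl0[OF Dw] bl1[OF Dw]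
    by (simp add: x_def y_def z_def ww_def eps_len1_single algebra_simps)
  have "eps [1] (betaA (k [(1, False)])) = eps [1] (k (betaA D))" using RB bbb kb by simp
  then have E4: "ww = - y * z + ww * ww"
    using bl1[OF kW] kl[OF aW(2)] kl[OF bW] bl0[OF Dw] bl1[OF Dw]
    by (simp add: x_def y_def z_def ww_def eps_len1_single algebra_simps)
  obtain X where X: "X \<in> W" "k X = [(0, False)]" using surj_obtain[OF surj aW(1)] by blast
  obtain Y where Y: "Y \<in> W" "k Y = [(1, False)]" using surj_obtain[OF surj aW(2)] by blast
  have D1: "x * eps [0] X + y * eps [1] X = 1" and D2: "z * eps [0] X + ww * eps [1] X = 0"
    using kl[OF X(1), of 0] kl[OF X(1), of 1] X(2)
    by (simp_all add: x_def y_def z_def ww_def eps_len1_single algebra_simps)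
  have D3: "x * eps [0] Y + y * eps [1] Y = 0" and D4: "z * eps [0] Y + ww * eps [1] Y = 1"
    using kl[OF Y(1), of 0] kl[OF Y(1), of 1] Y(2)
    by (simp_all add: x_def y_def z_def ww_def eps_len1_single algebra_simps)
  have vals: "x = -1 \<and> y = 0 \<and> z = 0 \<and> ww = 1"
    using int_sys[OF E1 E2 E3 E4 D1 D2 D3 D4] .
  have ia: "eps [0] u = 1" "eps [1] u = 0" "eps [0] v = 0" "eps [1] v = 1"
    using vals bl0[OF Cw] bl1[OF Cw] bl0[OF Dw] bl1[OF Dw]
    by (simp_all add: u_def v_def x_def y_def z_def ww_def)
  have uv: "u \<in> words 2" "v \<in> words 2" using bW by (simp_all add: u_def v_def W_def)
  have "u = [(0, False)] \<and> v = [(1, False)]" using magnus_fix[OF uv t0 t1 ia] .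
  then have "C = betaA [(0, False)] \<and> D = betaA [(1, False)]"
    using bb[OF Cw] bb[OF Dw] by (simp add: u_def v_def)
  then show ?thesis using ba bbb by simp
qed



lemma swapab_inv_words: "w \<in> words 2 \<Longrightarrow> swapab (swapab w) = w"
  by (rule swapab_swapab) (simp add: words_def)

lemma bij_swapab: "bij_betw swapab (words 2) (words 2)"
  by (rule bij_betw_byWitness[where f'=swapab]) (auto simp: swapab_inv_words swapab_words)

lemma conj_swapab:
  assumes w: "w \<in> words 2" and UV: "U \<in> words 2" "V \<in> words 2"
  shows "swapab (subst (sub2 U V) (swapab w)) = subst (sub2 (swapab V) (swapab U)) w"
proof -
  have "subst (sub2 U V) (swapab w) = subst (\<lambda>g. sub2 U V (sw g)) w" by (rule subst_swapab)
  moreover have "swapab (subst (\<lambda>g. sub2 U V (sw g)) w) = subst (\<lambda>g. swapab (sub2 U V (sw g))) w"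
    using UV w by (intro swapab_subst) (auto simp: words_def sub2_def sw_def)
  moreover have "(\<lambda>g. swapab (sub2 U V (sw g))) = sub2 (swapab V) (swapab U)"
    by (auto simp: fun_eq_iff sub2_def sw_def)
  ultimately show ?thesis by simp
qed

lemma lemmaL':
  assumes AB: "A \<in> words 2" "B \<in> words 2" and aut: "is_aut2 A B"
    and rel: "\<And>w. w \<in> words 2 \<Longrightarrow>
      subst (sub2 [(0, False)] [(1, True)]) (subst (sub2 A B) (subst (sub2 [(0, False)] [(1, True)]) w))
      = subst (sub2 A B) (subst (sub2 [(0, False)] [(1, True)]) (subst (sub2 A B) w))"
  shows "A = [(0, False)] \<and> B = [(1, True)]"
proof -
  define W where "W = words 2"
  define t where "t = subst (sub2 A B)"
  define c where "c = subst (sub2 [(0, False)] [(1, True)])"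
  define k where "k = subst (sub2 (swapab B) (swapab A))"
  have tW: "t w \<in> W" for w unfolding t_def W_def using AB by (rule subst_words2)
  have cW: "c w \<in> W" for w unfolding c_def W_def by (rule subst_words2) simp_all
  have sW: "w \<in> W \<Longrightarrow> swapab w \<in> W" for w unfolding W_def by (rule swapab_words)
  have ss: "w \<in> W \<Longrightarrow> swapab (swapab w) = w" for w unfolding W_def by (rule swapab_inv_words)
  have k: "w \<in> W \<Longrightarrow> k w = swapab (t (swapab w))" for w
    unfolding k_def t_def W_def using conj_swapab AB by simp
  have b: "w \<in> W \<Longrightarrow> betaA w = swapab (c (swapab w))" for w
  proof -
    assume w: "w \<in> W"
    have e: "sub2 (swapab [(1, True)]) (swapab [(0, False)]) = sub2 [(0, True)] [(1, False)]"
      by (simp add: swapab_alt sw_def)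
    show ?thesis
      using conj_swapab[of w "[(0, False)]" "[(1, True)]"] w unfolding betaA_def c_def W_def e by simp
  qed
  have CD: "swapab B \<in> words 2" "swapab A \<in> words 2" using AB swapab_words by auto
  have bij: "bij_betw k W W"
  proof -
    have b1: "bij_betw swapab W W" unfolding W_def by (rule bij_swapab)
    have b2: "bij_betw t W W" using aut unfolding is_aut2_def t_def W_def .
    have "bij_betw (t \<circ> swapab) W W" by (rule bij_betw_trans[OF b1 b2])
    then have "bij_betw (swapab \<circ> (t \<circ> swapab)) W W" by (rule bij_betw_trans[OF _ b1])
    moreover have "bij_betw (swapab \<circ> (t \<circ> swapab)) W W = bij_betw k W W"
    proof (rule bij_betw_cong)
      fix w assume "w \<in> W"
      then show "(swapab \<circ> (t \<circ> swapab)) w = k w" using k[of w] by simp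
    qed
    ultimately show ?thesis by simp
  qed
  have R: "betaA (k (betaA w)) = k (betaA (k w))" if w: "w \<in> W" for w
  proof -
    have sw: "swapab w \<in> W" using sW[OF w] .
    have e1: "betaA w = swapab (c (swapab w))" using b[OF w] .
    have e2: "k (betaA w) = swapab (t (c (swapab w)))"
      using k[OF sW[OF cW]] e1 ss[OF cW] by simp
    have e3: "betaA (k (betaA w)) = swapab (c (t (c (swapab w))))"
      using b[OF sW[OF tW]] e2 ss[OF tW] by simp
    have f1: "k w = swapab (t (swapab w))" using k[OF w] .
    have f2: "betaA (k w) = swapab (c (t (swapab w)))"
      using b[OF sW[OF tW]] f1 ss[OF tW] by simp
    have f3: "k (betaA (k w)) = swapab (t (c (t (swapab w))))"
      using k[OF sW[OF cW]] f2 ss[OF cW] by simp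
    have "c (t (c (swapab w))) = t (c (t (swapab w)))"
      using rel[of "swapab w"] sw unfolding c_def t_def W_def by simp
    then show ?thesis using e3 f3 by simp
  qed
  have "swapab B = [(0, True)] \<and> swapab A = [(1, False)]"
    using lemmaL[OF CD] bij R unfolding is_aut2_def k_def W_def by blast
  then have "swapab (swapab B) = [(1, True)] \<and> swapab (swapab A) = [(0, False)]"
    by (simp add: swapab_alt sw_def)
  then show ?thesis using ss AB unfolding W_def by simp
qed



lemma reduced_one_gen: "reduced w \<Longrightarrow> (\<forall>l \<in> set w. fst l = g) \<Longrightarrow> \<exists>e. w = replicate (length w) (g, e)"
proof (induction w)
  case Nil then show ?case by simp
next
  case (Cons x w)
  show ?case
  proof (cases w)
    case Nil then show ?thesis using Cons.prems by (cases x) auto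
  next
    case (Cons y r)
    have "reduced w" using Cons.prems(1) reduced_tl by blast
    then obtain e where e: "w = replicate (length w) (g, e)" using Cons.IH Cons.prems by auto
    have "y = (g, e)" using e Cons by (cases "length w") auto
    moreover have "fst x = g" using Cons.prems by simp
    moreover have "\<not> cnc x y" using Cons.prems(1) Cons by simp
    ultimately have "x = (g, e)" by (cases x) (auto simp: cnc_def)
    then show ?thesis using e by (metis length_Cons replicate_Suc)
  qed
qed

lemma eps_len1_replicate: "eps [g] (replicate n (g, e)) = (if e then - int n else int n)"
  by (induction n) (auto simp: eps_len1_Cons)

lemma B_form:
  assumes AB: "A \<in> words 2" "B \<in> words 2" and aut: "is_aut2 A B" and nb: "\<forall>l \<in> set B. fst l \<noteq> 0"
  shows "B = [(1, False)] \<or> B = [(1, True)]"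
proof -
  let ?t = "subst (sub2 A B)"
  have surj: "?t ` words 2 = words 2" using aut by (simp add: is_aut2_def bij_betw_def)
  have g1: "\<forall>l \<in> set B. fst l = 1"
  proof
    fix l assume l: "l \<in> set B"
    then have "fst l < 2" "fst l \<noteq> 0" using nb AB(2) by (auto simp: words_def)
    then show "fst l = 1" by simp
  qed
  have rB: "reduced B" using AB(2) by (simp add: words_def)
  obtain e where Be: "B = replicate (length B) (1, e)" using reduced_one_gen[OF rB g1] by blast
  have e0B: "eps [0] B = 0" using nb by (intro eps_len1_notin) auto
  have tl: "eps [j] (?t w) = eps [0] w * eps [j] A + eps [1] w * eps [j] B" if "w \<in> words 2" for w j
    using len1_subst2[OF that] .
  obtain X where X: "X \<in> words 2" "?t X = [(0, False)]" using surj_obtain[OF surj, of "[(0, False)]"] by auto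
  obtain Y where Y: "Y \<in> words 2" "?t Y = [(1, False)]" using surj_obtain[OF surj, of "[(1, False)]"] by auto
  have "eps [0] X * eps [0] A = 1" using tl[OF X(1), of 0] X(2) e0B by (simp add: eps_len1_single)
  then have A0: "eps [0] A \<noteq> 0" by auto
  have "eps [0] Y * eps [0] A = 0" using tl[OF Y(1), of 0] Y(2) e0B by (simp add: eps_len1_single)
  then have Y0: "eps [0] Y = 0" using A0 by simp
  have "eps [1] Y * eps [1] B = 1" using tl[OF Y(1), of 1] Y(2) Y0 by (simp add: eps_len1_single)
  then have "eps [1] B = 1 \<or> eps [1] B = -1" using zmult_eq_1_iff by (metis mult.commute)
  moreover have "eps [1] B = (if e then - int (length B) else int (length B))"
    using Be eps_len1_replicate by metis
  ultimately have "length B = 1" by (auto split: if_splits)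
  then have "B = [(1, e)]" using Be by (simp add: numeral_eq_Suc)
  then show ?thesis by (cases e) auto
qed

theorem proposition2p3:
  fixes A B C D :: word
  assumes "local_braid_rep A B C D"
    and "\<forall>l \<in> set B. fst l \<noteq> 0"
  shows "equiv_nat_sym (A, B, C, D) ([(0, False)], [(1, False)], [(0, False)], [(1, False)])
       \<or> equiv_nat_sym (A, B, C, D) ([(0, False)], [(1, True)], [(0, True)], [(1, False)])"
proof -
  have AB: "A \<in> words 2" "B \<in> words 2" and CD: "C \<in> words 2" "D \<in> words 2"
    and autAB: "is_aut2 A B" and autCD: "is_aut2 C D"
    and braid: "\<And>w. w \<in> words 3 \<Longrightarrow> subst (s1 A B) (subst (s2 C D) (subst (s1 A B) w)) =
        subst (s2 C D) (subst (s1 A B) (subst (s2 C D) w))"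
    using assms(1) unfolding local_braid_rep_def by blast+
  define W where "W = words 2"
  define phi where "phi = subst (s1 A B)"
  define psi where "psi = subst (s2 C D)"
  define tau where "tau = subst (sub2 A B)"
  define kap where "kap = subst (sub2 C D)"
  have br: "w \<in> words 3 \<Longrightarrow> phi (psi (phi w)) = psi (phi (psi w))" for w
    using braid unfolding phi_def psi_def by blast
  have tauW: "tau w \<in> W" for w unfolding tau_def W_def using AB by (rule subst_words2)
  have kapW: "kap w \<in> W" for w unfolding kap_def W_def using CD by (rule subst_words2)
  have W3: "w \<in> W \<Longrightarrow> w \<in> words 3" for w unfolding W_def using words_mono[of w 2 3] by simp
  have injt: "inj_on tau W" using autAB unfolding is_aut2_def tau_def W_def bij_betw_def by blast
  have injk: "inj_on kap W" using autCD unfolding is_aut2_def kap_def W_def bij_betw_def by blast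
  have phiW: "phi w = tau w" if "w \<in> W" for w
    unfolding phi_def tau_def
  proof (rule subst_cong)
    fix x assume "x \<in> set w"
    then have "fst x < 2" using that by (auto simp: W_def words_def)
    then show "s1 A B (fst x) = sub2 A B (fst x)" by (auto simp: s1_def sub2_def)
  qed
  have psishift: "psi (shift w) = shift (kap w)" for w
  proof -
    have "psi (shift w) = subst (\<lambda>g. s2 C D (Suc g)) w" unfolding psi_def by (rule subst_shift)
    also have "(\<lambda>g. s2 C D (Suc g)) = (\<lambda>g. shift (sub2 C D g))"
      by (auto simp: fun_eq_iff s2_def sub2_def)
    also have "subst (\<lambda>g. shift (sub2 C D g)) w = shift (kap w)"
      unfolding kap_def by (rule shift_subst[symmetric])
    finally show ?thesis .
  qed
  have phishift: "phi (shift w) = shift (subst (sub2 [(0, e)] [(1, False)]) w)" if Be: "B = [(1, e)]" for w e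
  proof -
    have "phi (shift w) = subst (\<lambda>g. s1 A B (Suc g)) w" unfolding phi_def by (rule subst_shift)
    also have "(\<lambda>g. s1 A B (Suc g)) = (\<lambda>g. shift (sub2 [(0, e)] [(1, False)] g))"
      using Be by (auto simp: fun_eq_iff s1_def sub2_def shift_def)
    also have "subst (\<lambda>g. shift (sub2 [(0, e)] [(1, False)] g)) w = shift (subst (sub2 [(0, e)] [(1, False)]) w)"
      by (rule shift_subst[symmetric])
    finally show ?thesis .
  qed
  have restr: "subst (sub2 [(0, e)] [(1, False)]) (kap (subst (sub2 [(0, e)] [(1, False)]) w))
     = kap (subst (sub2 [(0, e)] [(1, False)]) (kap w))" if Be: "B = [(1, e)]" and w: "w \<in> W" for w e
  proof -
    let ?b = "subst (sub2 [(0, e)] [(1, False)])"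
    have sw: "shift w \<in> words 3" using shift_words[of w 2] w by (simp add: W_def numeral_eq_Suc)
    have "phi (psi (phi (shift w))) = shift (?b (kap (?b w)))"
      using phishift[OF Be] psishift by simp
    moreover have "psi (phi (psi (shift w))) = shift (kap (?b (kap w)))"
      using phishift[OF Be] psishift by simp
    ultimately show ?thesis using br[OF sw] shift_inj by metis
  qed
  have aW: "[(0, False)] \<in> W" "[(1, False)] \<in> W" by (simp_all add: W_def)
  have tau_a: "tau [(0, False)] = A" using AB by (simp add: tau_def sub2_def words_red)
  have kap_a: "kap [(0, False)] = C" and kap_b: "kap [(1, False)] = D"
    using CD by (simp_all add: kap_def sub2_def words_red)
  have Bc: "B = [(1, False)] \<or> B = [(1, True)]" using B_form[OF AB autAB assms(2)] .
  then show ?thesis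
  proof
    assume Bf: "B = [(1, False)]"
    have bid: "subst (sub2 [(0, False)] [(1, False)]) w = w" if "w \<in> W" for w
    proof -
      have "subst (sub2 [(0, False)] [(1, False)]) w = red w"
      proof (rule subst_id)
        fix x assume "x \<in> set w"
        then have "fst x = 0 \<or> fst x = 1" using that by (auto simp: W_def words_def)
        then show "sub2 [(0, False)] [(1, False)] (fst x) = [(fst x, False)]" by (auto simp: sub2_def)
      qed
      then show ?thesis using that words_red by (simp add: W_def)
    qed
    have kk: "kap w = kap (kap w)" if "w \<in> W" for w
      using restr[OF Bf that] bid[OF that] bid[OF kapW] by simp
    have kid: "kap w = w" if "w \<in> W" for w
      using inj_onD[OF injk kk[OF that, symmetric] kapW that] .
    have C: "C = [(0, False)]" using kid[OF aW(1)] kap_a by simp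
    have D: "D = [(1, False)]" using kid[OF aW(2)] kap_b by simp
    have psid: "psi w = w" if "w \<in> words 3" for w
    proof -
      have "psi w = red w" unfolding psi_def
      proof (rule subst_id)
        fix x assume "x \<in> set w"
        then have "fst x = 0 \<or> fst x = 1 \<or> fst x = 2" using that by (auto simp: words_def)
        then show "s2 C D (fst x) = [(fst x, False)]" using C D by (auto simp: s2_def shift_def)
      qed
      then show ?thesis using that words_red by simp
    qed
    have x1: "[(0, False)] \<in> words 3" by simp
    have phia: "phi [(0, False)] = A" using AB by (simp add: phi_def s1_def words_red)
    have "phi A = A" using br[OF x1] psid[OF x1] psid[OF W3[of A]] phia AB by (simp add: W_def)
    then have "tau A = tau [(0, False)]" using phiW[of A] AB tau_a by (simp add: W_def)
    moreover have "A \<in> W" using AB by (simp add: W_def)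
    ultimately have "A = [(0, False)]" using inj_onD[OF injt _ _ aW(1)] by blast
    then have "(A, B, C, D) = ([(0, False)], [(1, False)], [(0, False)], [(1, False)])"
      using Bf C D by simp
    then show ?thesis unfolding equiv_nat_sym_def by simp
  next
    assume Bt: "B = [(1, True)]"
    have "C = [(0, True)] \<and> D = [(1, False)]"
    proof (rule lemmaL[OF CD autCD])
      fix w assume "w \<in> words 2"
      then show "betaA (subst (sub2 C D) (betaA w)) = subst (sub2 C D) (betaA (subst (sub2 C D) w))"
        using restr[OF Bt, of w] unfolding betaA_def kap_def W_def by simp
    qed
    then have C: "C = [(0, True)]" and D: "D = [(1, False)]" by auto
    define gam where "gam = subst (sub2 [(0, False)] [(1, True)])"
    have gamW: "gam w \<in> W" for w unfolding gam_def W_def by (rule subst_words2) simp_all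
    have psiW: "psi w = gam w" if "w \<in> W" for w
      unfolding psi_def gam_def
    proof (rule subst_cong)
      fix x assume "x \<in> set w"
      then have "fst x = 0 \<or> fst x = 1" using that by (auto simp: W_def words_def)
      then show "s2 C D (fst x) = sub2 [(0, False)] [(1, True)] (fst x)"
        using C by (auto simp: s2_def sub2_def shift_def)
    qed
    have "A = [(0, False)] \<and> B = [(1, True)]"
    proof (rule lemmaL'[OF AB autAB])
      fix w assume w: "w \<in> words 2"
      then have wW: "w \<in> W" by (simp add: W_def)
      have "phi (psi (phi w)) = tau (gam (tau w))"
        using phiW[OF wW] psiW[OF tauW] phiW[OF gamW] by simp
      moreover have "psi (phi (psi w)) = gam (tau (gam w))"
        using psiW[OF wW] phiW[OF gamW] psiW[OF tauW] by simp
      ultimately have "gam (tau (gam w)) = tau (gam (tau w))" using br[OF W3[OF wW]] by simp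
      then show "subst (sub2 [(0, False)] [(1, True)]) (subst (sub2 A B) (subst (sub2 [(0, False)] [(1, True)]) w))
        = subst (sub2 A B) (subst (sub2 [(0, False)] [(1, True)]) (subst (sub2 A B) w))"
        unfolding gam_def tau_def .
    qed
    then have "(A, B, C, D) = ([(0, False)], [(1, True)], [(0, True)], [(1, False)])"
      using C D by simp
    then show ?thesis unfolding equiv_nat_sym_def by simp
  qed
qed


end
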